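(* Consider the setting described in the context, fix a state $\boldsymbol{x}\in\mathcal{R}_r$ (so region $r$ is the active one), constants $\rho>0$, $\lambda>0$, $\beta_r\ge 0$, and a class $\mathcal{K}$ function $\alpha$. Suppose $m_r^V,m_r^h$ are the Gaussian-process posterior means and $\sigma_r^V,\sigma_r^h$ the posterior standard deviations given by the formulas in the context. Then the optimization problem in the variables $(\boldsymbol{u},d)\in\mathbb{R}^m\times\mathbb{R}$ $$\min_{\boldsymbol{u},d}\ \|\boldsymbol{u}\|_2^2+\rho d^2$$ subject to $$\hat{\dot V}(\boldsymbol{x},\boldsymbol{u})+m_r^V(\boldsymbol{x},\boldsymbol{u})+\beta_r\sigma_r^V(\boldsymbol{x},\boldsymbol{u})+\lambda V(\boldsymbol{x})\le d,$$ $$\hat{\dot h}(\boldsymbol{x},\boldsymbol{u})+m_r^h(\boldsymbol{x},\boldsymbol{u})-\beta_r\sigma_r^h(\boldsymbol{x},\boldsymbol{u})+\alpha(h(\boldsymbol{x}))\ge 0$$ is convex and can be converted into an equivalent standard second-order cone program of the form $$\min_{\boldsymbol{z}}\ \boldsymbol{f}^T\boldsymbol{z}\quad\text{s.t.}\quad \|M^i\boldsymbol{z}+\boldsymbol{n}^i\|_2\le (\boldsymbol{p}^i)^T\boldsymbol{z}+q^i,\quad i=1,\dots,n_c,$$ for a vector variable $\boldsymbol{z}\in\mathbb{R}^{n_z}$ and suitable (state-dependent) $\boldsymbol{f}$, matrices $M^i$, vectors $\boldsymbol{n}^i,\boldsymbol{p}^i$ and scalars $q^i$.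
   Context: Setting: a switching control-affine system $\dot{\boldsymbol{x}}=\sum_{r=1}^R\delta_r(f_r(\boldsymbol{x})+g_r(\boldsymbol{x})\boldsymbol{u})$ with state $\boldsymbol{x}\in\mathcal{X}\subset\mathbb{R}^n$ ($\mathcal{X}$ compact and convex) and input $\boldsymbol{u}\in\mathbb{R}^m$, where $\mathcal{R}_1,\dots,\mathcal{R}_R$ are pairwise disjoint sets covering $\mathcal{X}$ and $\delta_r(\boldsymbol{x})=1$ if $\boldsymbol{x}\in\mathcal{R}_r$ and $0$ otherwise. A nominal model $\dot{\boldsymbol{x}}=\hat f(\boldsymbol{x})+\hat g(\boldsymbol{x})\boldsymbol{u}$ with locally Lipschitz $\hat f,\hat g$ is given. $V:\mathcal{X}\to\mathbb{R}$ (a control Lyapunov function) and $h:\mathbb{R}^n\to\mathbb{R}$ (a control barrier function) are continuously differentiable, and their nominal time derivatives are $\hat{\dot V}(\boldsymbol{x},\boldsymbol{u})=L_{\hat f}V(\boldsymbol{x})+L_{\hat g}V(\boldsymbol{x})\boldsymbol{u}$ and $\hat{\dot h}(\boldsymbol{x},\boldsymbol{u})=L_{\hat f}h(\boldsymbol{x})+L_{\hat g}h(\boldsymbol{x})\boldsymbol{u}$ ($L$ denotes Lie derivative). Write $\boldsymbol{y}=[1,\boldsymbol{u}^T]^T\in\mathbb{R}^{m+1}$. Gaussian-process model: for each region $r$ and each of the two outputs (the CLF residual, superscript $V$, and the CBF residual, superscript $h$) a Gaussian process with zero prior mean and kernel $k_r((\boldsymbol{x},\boldsymbol{y}),(\boldsymbol{x}',\boldsymbol{y}'))=\boldsymbol{y}^T\Lambda_r(\boldsymbol{x},\boldsymbol{x}')\boldsymbol{y}'$,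 $\Lambda_r=\operatorname{diag}(k_r^1,\dots,k_r^{m+1})$ with positive-definite base kernels $k_r^i$ on $\mathcal{R}_r$ (chosen separately for the $V$ and $h$ outputs), is conditioned on data: $N_r$ input pairs $(\boldsymbol{x}_j,\boldsymbol{y}_j)$ with $\boldsymbol{x}_j\in\mathcal{R}_r$, collected as columns of $X_r\in\mathbb{R}^{n\times N_r}$, $Y_r\in\mathbb{R}^{(m+1)\times N_r}$, with output vector $\boldsymbol{\omega}_r\in\mathbb{R}^{N_r}$ ($\boldsymbol{\omega}_r^V$ or $\boldsymbol{\omega}_r^h$) and noise variance $\sigma_n^2>0$. With $K_r$ the Gram matrix of $k_r$ on the data and $\bar K_r=[\bar{\boldsymbol{k}}_r^1,\dots,\bar{\boldsymbol{k}}_r^{N_r}]\circ Y_r\in\mathbb{R}^{(m+1)\times N_r}$, $\bar{\boldsymbol{k}}_r^i=[k_r^1(\boldsymbol{x},\boldsymbol{x}_i),\dots,k_r^{m+1}(\boldsymbol{x},\boldsymbol{x}_i)]^T$ ($\circ$ = Hadamard product), the posterior mean and variance at $(\boldsymbol{x},\boldsymbol{y})$ are $m_r=\boldsymbol{\omega}_r^T(K_r+\sigma_n^2I)^{-1}\bar K_r^T\boldsymbol{y}$ and $\sigma_r^2=\boldsymbol{y}^T\big(\Lambda_r(\boldsymbol{x},\boldsymbol{x})-\bar K_r(K_r+\sigma_n^2I)^{-1}\bar K_r^T\big)\boldsymbol{y}$, with $\sigma_r\ge0$ the standard deviation; applying this with the $V$-data/kernels gives $m_r^V,\sigma_r^V$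 and with the $h$-data/kernels gives $m_r^h,\sigma_r^h$. A class $\mathcal{K}$ function is a continuous strictly increasing $\alpha:[0,a)\to[0,\infty)$ with $\alpha(0)=0$. *)

theory Defs
  imports "HOL-Analysis.Analysis"
begin

text \<open>Augmented input y = [1, u]; the extra coordinate is the index None.\<close>
definition aug :: "real^('m::finite) \<Rightarrow> real^('m option)" where
  "aug u = (\<chi> i. case i of None \<Rightarrow> 1 | Some j \<Rightarrow> u $ j)"

definition pd_kernel :: "'a set \<Rightarrow> ('a \<Rightarrow> 'a \<Rightarrow> real) \<Rightarrow> bool" where
  "pd_kernel S k \<longleftrightarrow> (\<forall>x\<in>S. \<forall>y\<in>S. k x y = k y x) \<and>
     (\<forall>(F::nat) (p::nat \<Rightarrow> 'a) (c::nat \<Rightarrow> real). (\<forall>i<F. p i \<in> S) \<longrightarrow>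
        0 \<le> (\<Sum>i<F. \<Sum>j<F. c i * c j * k (p i) (p j)))"

definition class_K :: "ereal \<Rightarrow> (real \<Rightarrow> real) \<Rightarrow> bool" where
  "class_K a \<alpha> \<longleftrightarrow> 0 < a \<and> continuous_on {t. 0 \<le> t \<and> ereal t < a} \<alpha> \<and>
     strict_mono_on {t. 0 \<le> t \<and> ereal t < a} \<alpha> \<and> \<alpha> 0 = 0 \<and>
     (\<forall>t. 0 \<le> t \<and> ereal t < a \<longrightarrow> 0 \<le> \<alpha> t)"

definition locally_lipschitz :: "('a::metric_space \<Rightarrow> 'b::metric_space) \<Rightarrow> bool" where
  "locally_lipschitz f \<longleftrightarrow> (\<forall>x. \<exists>e>0. \<exists>L. L-lipschitz_on (cball x e) f)"

definition C1_on :: "('a::real_normed_vector) set \<Rightarrow> ('a \<Rightarrow> real) \<Rightarrow> bool" where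
  "C1_on S f \<longleftrightarrow> (\<exists>D. (\<forall>x\<in>S. (f has_derivative blinfun_apply (D x)) (at x)) \<and> continuous_on S D)"

definition nominal_deriv ::
  "(real^'n \<Rightarrow> real) \<Rightarrow> (real^'n \<Rightarrow> real^'n) \<Rightarrow> (real^'n \<Rightarrow> real^'m^'n) \<Rightarrow> real^'n \<Rightarrow> real^'m \<Rightarrow> real"
  where "nominal_deriv W fh gh x u =
     frechet_derivative W (at x) (fh x) + frechet_derivative W (at x) (gh x *v u)"

text \<open>Gaussian process with kernel y^T Lambda(x,x') y'. Base kernels kb indexed by 'm option;
  data X j (states), Y j (augmented inputs), j :: 'N.\<close>
definition Lam :: "('m::finite option \<Rightarrow> real^'n \<Rightarrow> real^'n \<Rightarrow> real) \<Rightarrow> real^'n \<Rightarrow> real^'n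
     \<Rightarrow> real^('m option)^('m option)" where
  "Lam kb x x' = (\<chi> i j. if i = j then kb i x x' else 0)"

definition gram :: "('m::finite option \<Rightarrow> real^'n \<Rightarrow> real^'n \<Rightarrow> real) \<Rightarrow> ('N::finite \<Rightarrow> real^'n)
     \<Rightarrow> ('N \<Rightarrow> real^('m option)) \<Rightarrow> real^'N^'N" where
  "gram kb X Y = (\<chi> i j. \<Sum>l\<in>UNIV. Y i $ l * kb l (X i) (X j) * Y j $ l)"

definition kbar :: "('m::finite option \<Rightarrow> real^'n \<Rightarrow> real^'n \<Rightarrow> real) \<Rightarrow> ('N::finite \<Rightarrow> real^'n)
     \<Rightarrow> ('N \<Rightarrow> real^('m option)) \<Rightarrow> real^'n \<Rightarrow> real^'N^('m option)" where
  "kbar kb X Y x = (\<chi> l j. kb l x (X j) * Y j $ l)"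

definition gp_mean :: "('m::finite option \<Rightarrow> real^'n \<Rightarrow> real^'n \<Rightarrow> real) \<Rightarrow> ('N::finite \<Rightarrow> real^'n)
     \<Rightarrow> ('N \<Rightarrow> real^('m option)) \<Rightarrow> real^'N \<Rightarrow> real \<Rightarrow> real^'n \<Rightarrow> real^('m option) \<Rightarrow> real" where
  "gp_mean kb X Y \<omega> sn2 x y =
     \<omega> \<bullet> (matrix_inv (gram kb X Y + sn2 *\<^sub>R mat 1) *v (transpose (kbar kb X Y x) *v y))"

definition gp_var :: "('m::finite option \<Rightarrow> real^'n \<Rightarrow> real^'n \<Rightarrow> real) \<Rightarrow> ('N::finite \<Rightarrow> real^'n)
     \<Rightarrow> ('N \<Rightarrow> real^('m option)) \<Rightarrow> real \<Rightarrow> real^'n \<Rightarrow> real^('m option) \<Rightarrow> real" where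
  "gp_var kb X Y sn2 x y =
     y \<bullet> ((Lam kb x x - kbar kb X Y x ** matrix_inv (gram kb X Y + sn2 *\<^sub>R mat 1)
            ** transpose (kbar kb X Y x)) *v y)"

definition gp_sd :: "('m::finite option \<Rightarrow> real^'n \<Rightarrow> real^'n \<Rightarrow> real) \<Rightarrow> ('N::finite \<Rightarrow> real^'n)
     \<Rightarrow> ('N \<Rightarrow> real^('m option)) \<Rightarrow> real \<Rightarrow> real^'n \<Rightarrow> real^('m option) \<Rightarrow> real" where
  "gp_sd kb X Y sn2 x y = sqrt (gp_var kb X Y sn2 x y)"

text \<open>Standard SOCP data: variable z in R^nz (nat-indexed, zero beyond nz), nc cone constraints
  ||M^i z + n^i||_2 \<le> p^i . z + q^i, M^i having k i rows.\<close>
definition socp_feasible ::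
  "nat \<Rightarrow> nat \<Rightarrow> (nat \<Rightarrow> nat) \<Rightarrow> (nat \<Rightarrow> nat \<Rightarrow> nat \<Rightarrow> real) \<Rightarrow> (nat \<Rightarrow> nat \<Rightarrow> real)
     \<Rightarrow> (nat \<Rightarrow> nat \<Rightarrow> real) \<Rightarrow> (nat \<Rightarrow> real) \<Rightarrow> (nat \<Rightarrow> real) \<Rightarrow> bool" where
  "socp_feasible nz nc k M nv p q z \<longleftrightarrow>
     (\<forall>j\<ge>nz. z j = 0) \<and>
     (\<forall>i<nc. sqrt (\<Sum>l<k i. ((\<Sum>j<nz. M i l j * z j) + nv i l)\<^sup>2) \<le> (\<Sum>j<nz. p i j * z j) + q i)"

text \<open>The problem  min J(w) s.t. w \<in> F  (w = (u,d)) is equivalent to a standard SOCP: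
  there is an SOCP and a linear map z \<mapsto> (u,d) such that every feasible (u,d) is the image of
  an SOCP-feasible z whose cost equals J(u,d), and every SOCP-feasible z maps to a feasible
  (u,d) with J(u,d) \<le> cost(z). (Hence equal optimal values and corresponding optimisers.)\<close>
definition socp_equivalent :: "((real^('m::finite)) \<times> real) set \<Rightarrow> ((real^'m) \<times> real \<Rightarrow> real) \<Rightarrow> bool" where
  "socp_equivalent F J \<longleftrightarrow>
    (\<exists>(nz::nat) (nc::nat) k M nv p q (f::nat \<Rightarrow> real) (Pu::'m \<Rightarrow> nat \<Rightarrow> real) (Pd::nat \<Rightarrow> real).
      let proj = (\<lambda>z. ((\<chi> i. \<Sum>j<nz. Pu i j * z j), \<Sum>j<nz. Pd j * z j));
          cost = (\<lambda>z. \<Sum>j<nz. f j * z j)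
      in (\<forall>w\<in>F. \<exists>z. socp_feasible nz nc k M nv p q z \<and> proj z = w \<and> cost z = J w) \<and>
         (\<forall>z. socp_feasible nz nc k M nv p q z \<longrightarrow> proj z \<in> F \<and> J (proj z) \<le> cost z))"

end

theory Submission
  imports Defs
begin


definition qf :: "nat \<Rightarrow> (nat \<Rightarrow> nat \<Rightarrow> real) \<Rightarrow> (nat \<Rightarrow> real) \<Rightarrow> real" where
  "qf n Q y = (\<Sum>a<n. \<Sum>b<n. Q a b * y a * y b)"

lemma qf_sym: "qf n Q y = qf n (\<lambda>a b. (Q a b + Q b a) / 2) y"
proof -
  have "(\<Sum>a<n. \<Sum>b<n. Q b a * y a * y b) = (\<Sum>a<n. \<Sum>b<n. Q a b * y a * y b)"
    by (subst sum.swap) (simp add: mult_ac)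
  then show ?thesis unfolding qf_def
    by (simp add: add_divide_distrib distrib_right sum.distrib sum_divide_distrib[symmetric])
qed

lemma qf_Suc: "qf (Suc n) S y = qf n S y + y n * (\<Sum>a<n. (S a n + S n a) * y a) + S n n * (y n)\<^sup>2"
  unfolding qf_def
  by (simp add: sum.distrib distrib_right sum_distrib_left sum_distrib_right mult_ac power2_eq_square)
     (simp add: distrib_left sum.distrib mult_ac)

lemma qf_upd: "qf n S (y(n := t)) = qf n S y"
  unfolding qf_def by (intro sum.cong refl) auto

lemma sum_upd: "(\<Sum>a<(n::nat). c a * (y(n:=t)) a :: real) = (\<Sum>a<n. c a * y a)"
  by (rule sum.cong) auto

lemma sos_nat:
  assumes "\<forall>y. 0 \<le> qf n Q y"
  shows "\<exists>L. \<forall>y. qf n Q y = (\<Sum>l<n. (\<Sum>a<n. L l a * y a)\<^sup>2)"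
  using assms
proof (induction n arbitrary: Q)
  case 0
  then show ?case by (simp add: qf_def)
next
  case (Suc n)
  define S where "S = (\<lambda>a b. (Q a b + Q b a) / 2)"
  have QS: "qf m Q y = qf m S y" for m y unfolding S_def by (rule qf_sym)
  have Ssym: "S a b = S b a" for a b unfolding S_def by simp
  define s where "s = S n n"
  define \<beta> where "\<beta> = (\<lambda>y. \<Sum>a<n. S a n * y a)"
  have expand: "qf (Suc n) S y = qf n S y + 2 * y n * \<beta> y + s * (y n)\<^sup>2" for y
  proof -
    have "(\<Sum>a<n. (S a n + S n a) * y a) = 2 * \<beta> y"
      unfolding \<beta>_def by (simp add: Ssym sum_distrib_left mult_ac)
    then show ?thesis using qf_Suc[of n S y] unfolding s_def by simp
  qed
  have psd: "0 \<le> qf (Suc n) S y" for y using Suc.prems QS by metis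
  have bupd: "\<beta> (y(n:=t)) = \<beta> y" for y t unfolding \<beta>_def by (rule sum_upd)
  have s0: "0 \<le> s"
    using psd[of "\<lambda>a. if a = n then 1 else 0"] expand[of "\<lambda>a. if a = n then 1 else 0"]
    by (simp add: qf_def \<beta>_def)
  show ?case
  proof (cases "s = 0")
    case True
    have b0: "\<beta> y = 0" for y
    proof (rule ccontr)
      assume ne: "\<beta> y \<noteq> 0"
      define t where "t = - (qf n S y + 1) / (2 * \<beta> y)"
      have "qf (Suc n) S (y(n:=t)) = qf n S y + 2 * t * \<beta> y"
        using expand[of "y(n:=t)"] True by (simp add: qf_upd bupd)
      also have "\<dots> = -1" unfolding t_def using ne by (simp add: field_simps)
      finally show False using psd[of "y(n:=t)"] by simp
    qed
    have eq: "qf (Suc n) S y = qf n S y" for y using expand[of y] True b0 by simp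
    have "\<forall>y. 0 \<le> qf n S y" using psd eq by metis
    from Suc.IH[OF this] obtain L' where L': "\<forall>y. qf n S y = (\<Sum>l<n. (\<Sum>a<n. L' l a * y a)\<^sup>2)" by blast
    define L where "L = (\<lambda>l a. if l < n \<and> a < n then L' l a else 0)"
    have "qf (Suc n) Q y = (\<Sum>l<Suc n. (\<Sum>a<Suc n. L l a * y a)\<^sup>2)" for y
      using L' eq QS by (simp add: L_def)
    then show ?thesis by blast
  next
    case False
    with s0 have sp: "s > 0" by simp
    define Q' where "Q' = (\<lambda>a b. S a b - S a n * S b n / s)"
    have Q'eq: "qf n Q' y = qf n S y - (\<beta> y)\<^sup>2 / s" for y
    proof -
      have "(\<Sum>a<n. \<Sum>b<n. S a n * S b n / s * y a * y b) = (\<beta> y)\<^sup>2 / s"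
        unfolding \<beta>_def power2_eq_square sum_product sum_divide_distrib
        by (intro sum.cong refl) (simp add: mult_ac)
      then show ?thesis unfolding qf_def Q'_def
        by (simp add: left_diff_distrib sum_subtractf)
    qed
    have main: "qf (Suc n) S y = qf n Q' y + s * (y n + \<beta> y / s)\<^sup>2" for y
    proof -
      have a: "qf n S y = qf n Q' y + (\<beta> y)\<^sup>2 / s" using Q'eq[of y] by simp
      have b: "s * (y n + \<beta> y / s)\<^sup>2 = s * (y n)\<^sup>2 + 2 * y n * \<beta> y + (\<beta> y)\<^sup>2 / s"
        using sp by (simp add: power2_eq_square field_simps)
      show ?thesis using expand[of y] a b by simp
    qed
    have "0 \<le> qf n Q' y" for y
    proof -
      have "qf (Suc n) S (y(n := - \<beta> y / s)) = qf n Q' y"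
        using main[of "y(n := - \<beta> y / s)"] Q'eq by (simp add: qf_upd bupd)
      then show ?thesis using psd by metis
    qed
    then have "\<forall>y. 0 \<le> qf n Q' y" by blast
    from Suc.IH[OF this] obtain L' where L': "\<forall>y. qf n Q' y = (\<Sum>l<n. (\<Sum>a<n. L' l a * y a)\<^sup>2)" by blast
    define L where "L = (\<lambda>l a. if l < n then (if a < n then L' l a else 0)
                            else (if a < n then S a n / sqrt s else sqrt s))"
    have "qf (Suc n) Q y = (\<Sum>l<Suc n. (\<Sum>a<Suc n. L l a * y a)\<^sup>2)" for y
    proof -
      have r: "(\<Sum>a<Suc n. L n a * y a) = \<beta> y / sqrt s + sqrt s * y n"
        unfolding L_def \<beta>_def by (simp add: sum_divide_distrib)
      have "(\<beta> y / sqrt s + sqrt s * y n)\<^sup>2 = (\<beta> y)\<^sup>2 / s + 2 * \<beta> y * y n + s * (y n)\<^sup>2"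
        using sp by (simp add: power2_sum power_divide power_mult_distrib)
      also have "\<dots> = s * (y n + \<beta> y / s)\<^sup>2"
        using sp by (simp add: power2_eq_square field_simps)
      finally have "(\<beta> y / sqrt s + sqrt s * y n)\<^sup>2 = s * (y n + \<beta> y / s)\<^sup>2" .
      moreover have "(\<Sum>l<n. (\<Sum>a<Suc n. L l a * y a)\<^sup>2) = (\<Sum>l<n. (\<Sum>a<n. L' l a * y a)\<^sup>2)"
        unfolding L_def by simp
      ultimately show ?thesis using main[of y] L' QS r by simp
    qed
    then show ?thesis by blast
  qed
qed

lemma sos_vec:
  fixes A :: "real^'k^'k"
  assumes "\<forall>y. 0 \<le> y \<bullet> (A *v y)"
  shows "\<exists>(ls::nat \<Rightarrow> real^'k) K. \<forall>y. y \<bullet> (A *v y) = (\<Sum>l<K. (ls l \<bullet> y)\<^sup>2)"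
proof -
  define n where "n = CARD('k)"
  obtain E where E: "bij_betw E {..<n} (UNIV::'k set)"
    using ex_bij_betw_nat_finite[of "UNIV::'k set"] unfolding n_def by (auto simp: atLeast0LessThan)
  define Ei where "Ei = inv_into {..<n} E"
  have EiE: "Ei (E a) = a" if "a < n" for a
    using E that unfolding Ei_def by (simp add: bij_betw_inv_into_left)
  have reidx: "(\<Sum>i\<in>UNIV. g i) = (\<Sum>a<n. g (E a))" for g :: "'k \<Rightarrow> real"
    using sum.reindex_bij_betw[OF E, of g] by simp
  define Q where "Q = (\<lambda>a b. A $ E a $ E b)"
  have form: "y \<bullet> (A *v y) = qf n Q (\<lambda>a. y $ E a)" for y
  proof -
    have "y \<bullet> (A *v y) = (\<Sum>i\<in>UNIV. \<Sum>j\<in>UNIV. A $ i $ j * y $ i * y $ j)"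
      unfolding inner_vec_def matrix_vector_mult_def
      by (simp add: sum_distrib_left mult_ac)
    also have "\<dots> = qf n Q (\<lambda>a. y $ E a)"
      unfolding qf_def Q_def reidx ..
    finally show ?thesis .
  qed
  have "\<forall>yn. 0 \<le> qf n Q yn"
  proof
    fix yn :: "nat \<Rightarrow> real"
    define Y :: "real^'k" where "Y = (\<chi> i. yn (Ei i))"
    have "qf n Q yn = qf n Q (\<lambda>a. Y $ E a)"
      unfolding qf_def Y_def by (intro sum.cong refl) (simp add: EiE)
    also have "\<dots> = Y \<bullet> (A *v Y)" by (rule form[symmetric])
    finally show "0 \<le> qf n Q yn" using assms by simp
  qed
  from sos_nat[OF this] obtain L where L: "\<forall>yn. qf n Q yn = (\<Sum>l<n. (\<Sum>a<n. L l a * yn a)\<^sup>2)" by blast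
  define ls :: "nat \<Rightarrow> real^'k" where "ls = (\<lambda>l. (\<chi> i. L l (Ei i)))"
  have "ls l \<bullet> y = (\<Sum>a<n. L l a * y $ E a)" for l y
    unfolding ls_def inner_vec_def reidx by (intro sum.cong refl) (simp add: EiE)
  then have "\<forall>y. y \<bullet> (A *v y) = (\<Sum>l<n. (ls l \<bullet> y)\<^sup>2)" using form L by simp
  then show ?thesis by blast
qed

lemma sq_conv:
  fixes x y \<mu> \<nu> :: real
  assumes "0 \<le> \<mu>" "0 \<le> \<nu>" "\<mu> + \<nu> = 1"
  shows "(\<mu> * x + \<nu> * y)\<^sup>2 \<le> \<mu> * x\<^sup>2 + \<nu> * y\<^sup>2"
proof -
  have "\<mu> * x\<^sup>2 + \<nu> * y\<^sup>2 - (\<mu> * x + \<nu> * y)\<^sup>2 = \<mu> * \<nu> * (x - y)\<^sup>2"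
  proof -
    have n: "\<nu> = 1 - \<mu>" using assms(3) by simp
    show ?thesis unfolding n by (simp add: power2_eq_square algebra_simps)
  qed
  moreover have "0 \<le> \<mu> * \<nu> * (x - y)\<^sup>2" using assms by simp
  ultimately show ?thesis by linarith
qed

lemma aug_comb:
  assumes "\<mu> + \<nu> = 1"
  shows "aug (\<mu> *\<^sub>R u1 + \<nu> *\<^sub>R u2) = \<mu> *\<^sub>R aug u1 + \<nu> *\<^sub>R aug u2"
  using assms by (simp add: aug_def vec_eq_iff split: option.split)

lemma L2_conv:
  fixes a b :: "nat \<Rightarrow> real"
  assumes "0 \<le> \<mu>" "0 \<le> \<nu>"
  shows "sqrt (\<Sum>l<K. (\<mu> * a l + \<nu> * b l)\<^sup>2) \<le> \<mu> * sqrt (\<Sum>l<K. (a l)\<^sup>2) + \<nu> * sqrt (\<Sum>l<K. (b l)\<^sup>2)"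
proof -
  have "L2_set (\<lambda>l. \<mu> * a l + \<nu> * b l) {..<K} \<le> L2_set (\<lambda>l. \<mu> * a l) {..<K} + L2_set (\<lambda>l. \<nu> * b l) {..<K}"
    by (rule L2_set_triangle_ineq)
  also have "\<dots> = \<mu> * L2_set a {..<K} + \<nu> * L2_set b {..<K}"
    using assms by (simp add: L2_set_right_distrib)
  finally show ?thesis unfolding L2_set_def .
qed

lemma convex_F_generic:
  fixes gV gH :: "nat \<Rightarrow> real^('m::finite option)" and cV cH :: "real^('m option)"
  shows "convex {(u::real^'m, d::real). sqrt (\<Sum>l<KV. (gV l \<bullet> aug u)\<^sup>2) \<le> d - cV \<bullet> aug u
            \<and> sqrt (\<Sum>l<KH. (gH l \<bullet> aug u)\<^sup>2) \<le> cH \<bullet> aug u}"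
  unfolding convex_def
proof (clarsimp)
  fix u1 d1 u2 d2 and \<mu> \<nu> :: real
  assume h1: "sqrt (\<Sum>l<KV. (gV l \<bullet> aug u1)\<^sup>2) \<le> d1 - cV \<bullet> aug u1"
     and h2: "sqrt (\<Sum>l<KH. (gH l \<bullet> aug u1)\<^sup>2) \<le> cH \<bullet> aug u1"
     and h3: "sqrt (\<Sum>l<KV. (gV l \<bullet> aug u2)\<^sup>2) \<le> d2 - cV \<bullet> aug u2"
     and h4: "sqrt (\<Sum>l<KH. (gH l \<bullet> aug u2)\<^sup>2) \<le> cH \<bullet> aug u2"
     and m: "0 \<le> \<mu>" "0 \<le> \<nu>" "\<mu> + \<nu> = 1"
  have dot: "g \<bullet> aug (\<mu> *\<^sub>R u1 + \<nu> *\<^sub>R u2) = \<mu> * (g \<bullet> aug u1) + \<nu> * (g \<bullet> aug u2)" for g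
    unfolding aug_comb[OF m(3)] by (simp add: inner_add_right)
  have A: "sqrt (\<Sum>l<KV. (gV l \<bullet> aug (\<mu> *\<^sub>R u1 + \<nu> *\<^sub>R u2))\<^sup>2)
     \<le> \<mu> * sqrt (\<Sum>l<KV. (gV l \<bullet> aug u1)\<^sup>2) + \<nu> * sqrt (\<Sum>l<KV. (gV l \<bullet> aug u2)\<^sup>2)"
    unfolding dot by (rule L2_conv[OF m(1,2)])
  have B: "sqrt (\<Sum>l<KH. (gH l \<bullet> aug (\<mu> *\<^sub>R u1 + \<nu> *\<^sub>R u2))\<^sup>2)
     \<le> \<mu> * sqrt (\<Sum>l<KH. (gH l \<bullet> aug u1)\<^sup>2) + \<nu> * sqrt (\<Sum>l<KH. (gH l \<bullet> aug u2)\<^sup>2)"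
    unfolding dot by (rule L2_conv[OF m(1,2)])
  have "\<mu> * sqrt (\<Sum>l<KV. (gV l \<bullet> aug u1)\<^sup>2) \<le> \<mu> * (d1 - cV \<bullet> aug u1)"
    using h1 m(1) by (rule mult_left_mono)
  moreover have "\<nu> * sqrt (\<Sum>l<KV. (gV l \<bullet> aug u2)\<^sup>2) \<le> \<nu> * (d2 - cV \<bullet> aug u2)"
    using h3 m(2) by (rule mult_left_mono)
  moreover have "\<mu> * sqrt (\<Sum>l<KH. (gH l \<bullet> aug u1)\<^sup>2) \<le> \<mu> * (cH \<bullet> aug u1)"
    using h2 m(1) by (rule mult_left_mono)
  moreover have "\<nu> * sqrt (\<Sum>l<KH. (gH l \<bullet> aug u2)\<^sup>2) \<le> \<nu> * (cH \<bullet> aug u2)"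
    using h4 m(2) by (rule mult_left_mono)
  ultimately show "sqrt (\<Sum>l<KV. (gV l \<bullet> aug (\<mu> *\<^sub>R u1 + \<nu> *\<^sub>R u2))\<^sup>2)
           \<le> \<mu> * d1 + \<nu> * d2 - cV \<bullet> aug (\<mu> *\<^sub>R u1 + \<nu> *\<^sub>R u2) \<and>
         sqrt (\<Sum>l<KH. (gH l \<bullet> aug (\<mu> *\<^sub>R u1 + \<nu> *\<^sub>R u2))\<^sup>2)
           \<le> cH \<bullet> aug (\<mu> *\<^sub>R u1 + \<nu> *\<^sub>R u2)"
    using A B unfolding dot by (simp add: algebra_simps)
qed

lemma convex_on_J:
  assumes "rho > 0"
  shows "convex_on UNIV (\<lambda>(u :: real^'m, d :: real). (norm u)\<^sup>2 + rho * d\<^sup>2)"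
  unfolding convex_on_def
proof (clarsimp)
  fix u1 d1 u2 d2 and \<mu> \<nu> :: real
  assume m: "0 \<le> \<mu>" "0 \<le> \<nu>" "\<mu> + \<nu> = 1"
  have "norm (\<mu> *\<^sub>R u1 + \<nu> *\<^sub>R u2) \<le> \<mu> * norm u1 + \<nu> * norm u2"
    using m by (metis abs_of_nonneg norm_scaleR norm_triangle_ineq)
  then have "(norm (\<mu> *\<^sub>R u1 + \<nu> *\<^sub>R u2))\<^sup>2 \<le> (\<mu> * norm u1 + \<nu> * norm u2)\<^sup>2"
    by (simp add: power_mono)
  also have "\<dots> \<le> \<mu> * (norm u1)\<^sup>2 + \<nu> * (norm u2)\<^sup>2" by (rule sq_conv[OF m])
  finally have a: "(norm (\<mu> *\<^sub>R u1 + \<nu> *\<^sub>R u2))\<^sup>2 \<le> \<mu> * (norm u1)\<^sup>2 + \<nu> * (norm u2)\<^sup>2" .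
  have "rho * (\<mu> * d1 + \<nu> * d2)\<^sup>2 \<le> rho * (\<mu> * d1\<^sup>2 + \<nu> * d2\<^sup>2)"
    using sq_conv[OF m] assms by (simp add: mult_left_mono)
  then show "(norm (\<mu> *\<^sub>R u1 + \<nu> *\<^sub>R u2))\<^sup>2 + rho * (\<mu> * d1 + \<nu> * d2)\<^sup>2
         \<le> \<mu> * ((norm u1)\<^sup>2 + rho * d1\<^sup>2) + \<nu> * ((norm u2)\<^sup>2 + rho * d2\<^sup>2)"
    using a by (simp add: algebra_simps)
qed

lemma sum_option: "(\<Sum>i\<in>(UNIV::'a::finite option set). f i) = f None + (\<Sum>j\<in>UNIV. f (Some j))"
  by (simp add: UNIV_option_conv sum.reindex)

lemma aug_dot:
  fixes u :: "real^'m::finite" and c :: "real^('m option)"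
  assumes e: "bij_betw e {..<nm} (UNIV::'m set)" and R: "\<forall>a<nm. u $ e a = z a"
  shows "c \<bullet> aug u = c $ None + (\<Sum>a<nm. c $ Some (e a) * z a)"
proof -
  have "c \<bullet> aug u = c $ None + (\<Sum>j\<in>UNIV. c $ Some j * u $ j)"
    unfolding inner_vec_def sum_option by (simp add: aug_def)
  also have "(\<Sum>j\<in>UNIV. c $ Some j * u $ j) = (\<Sum>a<nm. c $ Some (e a) * u $ e a)"
    using sum.reindex_bij_betw[OF e, of "\<lambda>j. c $ Some j * u $ j"] by simp
  also have "\<dots> = (\<Sum>a<nm. c $ Some (e a) * z a)" using R by simp
  finally show ?thesis .
qed

lemma norm_sq_idx:
  fixes u :: "real^'m::finite"
  assumes e: "bij_betw e {..<nm} (UNIV::'m set)" and R: "\<forall>a<nm. u $ e a = z a"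
  shows "(norm u)\<^sup>2 = (\<Sum>a<nm. (z a)\<^sup>2)"
proof -
  have "(norm u)\<^sup>2 = (\<Sum>j\<in>UNIV. u $ j * u $ j)"
    unfolding power2_norm_eq_inner inner_vec_def by simp
  also have "\<dots> = (\<Sum>a<nm. u $ e a * u $ e a)"
    using sum.reindex_bij_betw[OF e, of "\<lambda>j. u $ j * u $ j"] by simp
  also have "\<dots> = (\<Sum>a<nm. (z a)\<^sup>2)" using R by (simp add: power2_eq_square)
  finally show ?thesis .
qed

lemma all3: "(\<forall>i<(3::nat). P i) \<longleftrightarrow> P 0 \<and> P 1 \<and> P 2"
  by (auto simp: numeral_3_eq_3 numeral_2_eq_2 less_Suc_eq)

lemma cone_obj:
  fixes X t :: real
  assumes "0 \<le> X"
  shows "sqrt (X + ((t - 1) / 2)\<^sup>2) \<le> (t + 1) / 2 \<longleftrightarrow> X \<le> t"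
proof
  assume h: "sqrt (X + ((t - 1) / 2)\<^sup>2) \<le> (t + 1) / 2"
  have nn: "0 \<le> X + ((t - 1) / 2)\<^sup>2" using assms zero_le_power2[of "(t - 1) / 2"] by linarith
  have "0 \<le> sqrt (X + ((t - 1) / 2)\<^sup>2)" using nn by simp
  then have "(sqrt (X + ((t - 1) / 2)\<^sup>2))\<^sup>2 \<le> ((t + 1) / 2)\<^sup>2" by (rule power_mono[OF h])
  moreover have "0 \<le> X + ((t - 1) / 2)\<^sup>2" using assms zero_le_power2[of "(t - 1) / 2"] by linarith
  ultimately have "X + ((t - 1) / 2)\<^sup>2 \<le> ((t + 1) / 2)\<^sup>2" by simp
  then show "X \<le> t" by (simp add: power2_eq_square field_simps)
next
  assume h: "X \<le> t"
  then have "X + ((t - 1) / 2)\<^sup>2 \<le> ((t + 1) / 2)\<^sup>2" by (simp add: power2_eq_square field_simps)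
  moreover have "0 \<le> (t + 1) / 2" using h assms by simp
  ultimately show "sqrt (X + ((t - 1) / 2)\<^sup>2) \<le> (t + 1) / 2" by (metis real_le_lsqrt)
qed

lemma sum_delta_mult:
  fixes z :: "nat \<Rightarrow> real"
  assumes "t < N"
  shows "(\<Sum>j<N. (if j = t then c else 0) * z j) = c * z t"
proof -
  have "(\<Sum>j<N. (if j = t then c else 0) * z j) = (\<Sum>j<N. if j = t then c * z j else 0)"
    by (rule sum.cong) auto
  also have "\<dots> = c * z t" using assms by (simp add: sum.delta)
  finally show ?thesis .
qed

lemma socp_generic:
  fixes gV gH :: "nat \<Rightarrow> real^('m::finite option)" and cV cH :: "real^('m option)" and rho :: real
  assumes rho: "rho > 0"
  shows "socp_equivalent {(u::real^'m, d::real). sqrt (\<Sum>l<KV. (gV l \<bullet> aug u)\<^sup>2) \<le> d - cV \<bullet> aug u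
            \<and> sqrt (\<Sum>l<KH. (gH l \<bullet> aug u)\<^sup>2) \<le> cH \<bullet> aug u}
          (\<lambda>(u :: real^'m, d :: real). (norm u)\<^sup>2 + rho * d\<^sup>2)"
    (is "socp_equivalent ?F ?J")
proof -
  define nm where "nm = CARD('m)"
  obtain e where e: "bij_betw e {..<nm} (UNIV::'m set)"
    using ex_bij_betw_nat_finite[of "UNIV::'m set"] unfolding nm_def by (auto simp: atLeast0LessThan)
  define Ei where "Ei = inv_into {..<nm} e"
  have EiE: "Ei (e a) = a" if "a < nm" for a
    using e that unfolding Ei_def by (simp add: bij_betw_inv_into_left)
  have EEi: "e (Ei i) = i" for i
    using e unfolding Ei_def by (simp add: bij_betw_inv_into_right)
  have Eilt: "Ei i < nm" for i
    using e unfolding Ei_def by (metis bij_betw_def inv_into_into lessThan_iff UNIV_I)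
  define nz where "nz = Suc (Suc nm)"
  define lin :: "real^('m option) \<Rightarrow> nat \<Rightarrow> real" where "lin c j = (if j < nm then c $ Some (e j) else 0)" for c j
  define w :: "nat \<Rightarrow> real" where "w l = (if l < nm then 1 else if l = nm then sqrt rho else 1/2)" for l
  define k :: "nat \<Rightarrow> nat" where "k i = (if i = 0 then KV else if i = 1 then KH else nz)" for i
  define M :: "nat \<Rightarrow> nat \<Rightarrow> nat \<Rightarrow> real" where
    "M i l j = (if i = 0 then lin (gV l) j else if i = 1 then lin (gH l) j else (if j = l then w l else 0))" for i l j
  define nv :: "nat \<Rightarrow> nat \<Rightarrow> real" where
    "nv i l = (if i = 0 then gV l $ None else if i = 1 then gH l $ None else if l = Suc nm then - 1/2 else 0)" for i l
  define p :: "nat \<Rightarrow> nat \<Rightarrow> real" where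
    "p i j = (if i = 0 then (if j = nm then 1 else 0) - lin cV j else if i = 1 then lin cH j
              else (if j = Suc nm then 1/2 else 0))" for i j
  define q :: "nat \<Rightarrow> real" where "q i = (if i = 0 then - cV $ None else if i = 1 then cH $ None else 1/2)" for i
  define f :: "nat \<Rightarrow> real" where "f j = (if j = Suc nm then 1 else 0)" for j
  define Pu :: "'m \<Rightarrow> nat \<Rightarrow> real" where "Pu i j = (if j < nm \<and> e j = i then 1 else 0)" for i j
  define Pd :: "nat \<Rightarrow> real" where "Pd j = (if j = nm then 1 else 0)" for j
  have sumlin: "(\<Sum>j<nz. lin c j * z j) = (\<Sum>a<nm. c $ Some (e a) * z a)" for c z
    unfolding nz_def lin_def by simp
  have sumPu: "(\<Sum>j<nz. Pu i j * z j) = z (Ei i)" for i z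
  proof -
    have "(\<Sum>j<nz. Pu i j * z j) = (\<Sum>j<nz. (if j = Ei i then 1 else 0) * z j)"
    proof (rule sum.cong)
      fix j assume "j \<in> {..<nz}"
      have "(j < nm \<and> e j = i) \<longleftrightarrow> j = Ei i" using EiE EEi Eilt by metis
      then show "Pu i j * z j = (if j = Ei i then 1 else 0) * z j" unfolding Pu_def by simp
    qed simp
    also have "\<dots> = z (Ei i)" using Eilt[of i] unfolding nz_def by (simp add: sum_delta_mult)
    finally show ?thesis .
  qed
  have sumPd: "(\<Sum>j<nz. Pd j * z j) = z nm" for z
    unfolding Pd_def nz_def by (simp add: sum_delta_mult)
  have sumf: "(\<Sum>j<nz. f j * z j) = z (Suc nm)" for z
    unfolding f_def nz_def by (simp add: sum_delta_mult)
  have feas: "socp_feasible nz 3 k M nv p q z \<longleftrightarrow> (u, z nm) \<in> ?F \<and> ?J (u, z nm) \<le> z (Suc nm)"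
    if R: "\<forall>a<nm. u $ e a = z a" and Z: "\<forall>j\<ge>nz. z j = 0" for u z
  proof -
    have r0: "(\<Sum>j<nz. M 0 l j * z j) + nv 0 l = gV l \<bullet> aug u" for l
      unfolding M_def nv_def using sumlin aug_dot[OF e R] by simp
    have r1: "(\<Sum>j<nz. M 1 l j * z j) + nv 1 l = gH l \<bullet> aug u" for l
      unfolding M_def nv_def using sumlin aug_dot[OF e R] by simp
    have p0: "(\<Sum>j<nz. p 0 j * z j) + q 0 = z nm - cV \<bullet> aug u"
    proof -
      have "(\<Sum>j<nz. p 0 j * z j) = (\<Sum>j<nz. (if j = nm then 1 else 0) * z j) - (\<Sum>j<nz. lin cV j * z j)"
        unfolding p_def by (simp add: left_diff_distrib sum_subtractf)
      also have "\<dots> = z nm - (\<Sum>a<nm. cV $ Some (e a) * z a)"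
        unfolding sumlin by (simp add: nz_def sum_delta_mult)
      finally show ?thesis unfolding q_def aug_dot[OF e R] by simp
    qed
    have p1: "(\<Sum>j<nz. p 1 j * z j) + q 1 = cH \<bullet> aug u"
      unfolding p_def q_def using sumlin aug_dot[OF e R] by simp
    have p2: "(\<Sum>j<nz. p 2 j * z j) + q 2 = (z (Suc nm) + 1) / 2"
      unfolding p_def q_def nz_def by (simp add: sum_delta_mult)
    have r2: "(\<Sum>j<nz. M 2 l j * z j) + nv 2 l = w l * z l + nv 2 l" if "l < nz" for l
      unfolding M_def using that by (simp add: sum_delta_mult)
    have c2: "(\<Sum>l<k 2. ((\<Sum>j<nz. M 2 l j * z j) + nv 2 l)\<^sup>2)
              = ?J (u, z nm) + ((z (Suc nm) - 1) / 2)\<^sup>2"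
    proof -
      have "(\<Sum>l<k 2. ((\<Sum>j<nz. M 2 l j * z j) + nv 2 l)\<^sup>2) = (\<Sum>l<nz. (w l * z l + nv 2 l)\<^sup>2)"
        unfolding k_def using r2 by simp
      also have "\<dots> = (\<Sum>a<nm. (z a)\<^sup>2) + (sqrt rho * z nm)\<^sup>2 + ((z (Suc nm) - 1) / 2)\<^sup>2"
        unfolding nz_def w_def nv_def by (simp add: diff_divide_distrib)
      also have "\<dots> = ?J (u, z nm) + ((z (Suc nm) - 1) / 2)\<^sup>2"
        using norm_sq_idx[OF e R] rho by (simp add: power_mult_distrib)
      finally show ?thesis .
    qed
    have J0: "0 \<le> ?J (u, z nm)" using rho by simp
    have k0: "k 0 = KV" and k1: "k 1 = KH" unfolding k_def by simp_all
    show ?thesis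
      unfolding socp_feasible_def all3 r0 r1 p0 p1 p2 c2 k0 k1 cone_obj[OF J0] using Z
      by auto
  qed
  show ?thesis
    unfolding socp_equivalent_def Let_def
  proof (intro exI conjI)
    show "\<forall>w\<in>?F. \<exists>z. socp_feasible nz 3 k M nv p q z \<and>
            ((\<chi> i. \<Sum>j<nz. Pu i j * z j), \<Sum>j<nz. Pd j * z j) = w \<and> (\<Sum>j<nz. f j * z j) = ?J w"
    proof
      fix wd assume wF: "wd \<in> ?F"
      obtain u d where wd: "wd = (u, d)" by fastforce
      define z where "z j = (if j < nm then u $ e j else if j = nm then d else if j = Suc nm then ?J (u, d) else 0)" for j
      have R: "\<forall>a<nm. u $ e a = z a" unfolding z_def by simp
      have Z: "\<forall>j\<ge>nz. z j = 0" unfolding z_def nz_def by simp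
      have "socp_feasible nz 3 k M nv p q z"
        using feas[OF R Z] wF wd unfolding z_def by simp
      moreover have "((\<chi> i. \<Sum>j<nz. Pu i j * z j), \<Sum>j<nz. Pd j * z j) = wd"
        unfolding sumPu sumPd wd by (simp add: vec_eq_iff z_def Eilt EEi)
      moreover have "(\<Sum>j<nz. f j * z j) = ?J wd" unfolding sumf wd z_def by simp
      ultimately show "\<exists>z. socp_feasible nz 3 k M nv p q z \<and>
            ((\<chi> i. \<Sum>j<nz. Pu i j * z j), \<Sum>j<nz. Pd j * z j) = wd \<and> (\<Sum>j<nz. f j * z j) = ?J wd"
        by blast
    qed
    show "\<forall>z. socp_feasible nz 3 k M nv p q z \<longrightarrow>
            ((\<chi> i. \<Sum>j<nz. Pu i j * z j), \<Sum>j<nz. Pd j * z j) \<in> ?F \<and>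
            ?J ((\<chi> i. \<Sum>j<nz. Pu i j * z j), \<Sum>j<nz. Pd j * z j) \<le> (\<Sum>j<nz. f j * z j)"
    proof (intro allI impI)
      fix z assume fz: "socp_feasible nz 3 k M nv p q z"
      define u :: "real^'m" where "u = (\<chi> i. z (Ei i))"
      have R: "\<forall>a<nm. u $ e a = z a" unfolding u_def by (simp add: EiE)
      have Z: "\<forall>j\<ge>nz. z j = 0" using fz unfolding socp_feasible_def by simp
      have pr: "((\<chi> i. \<Sum>j<nz. Pu i j * z j), \<Sum>j<nz. Pd j * z j) = (u, z nm)"
        unfolding sumPu sumPd u_def by simp
      show "((\<chi> i. \<Sum>j<nz. Pu i j * z j), \<Sum>j<nz. Pd j * z j) \<in> ?F \<and>
            ?J ((\<chi> i. \<Sum>j<nz. Pu i j * z j), \<Sum>j<nz. Pd j * z j) \<le> (\<Sum>j<nz. f j * z j)"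
        unfolding pr sumf using feas[OF R Z] fz by blast
    qed
  qed
qed



lemma pd_sum:
  fixes k :: "'b \<Rightarrow> 'b \<Rightarrow> real" and p :: "'a::finite \<Rightarrow> 'b"
  assumes pd: "pd_kernel S k" and P: "\<forall>i. p i \<in> S"
  shows "0 \<le> (\<Sum>i\<in>UNIV. \<Sum>j\<in>UNIV. c i * c j * k (p i) (p j))"
proof -
  define n where "n = CARD('a)"
  obtain E where E: "bij_betw E {..<n} (UNIV::'a set)"
    using ex_bij_betw_nat_finite[of "UNIV::'a set"] unfolding n_def by (auto simp: atLeast0LessThan)
  have reidx: "(\<Sum>i\<in>UNIV. g i) = (\<Sum>a<n. g (E a))" for g :: "'a \<Rightarrow> real"
    using sum.reindex_bij_betw[OF E, of g] by simp
  have "0 \<le> (\<Sum>a<n. \<Sum>b<n. c (E a) * c (E b) * k (p (E a)) (p (E b)))"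
  proof -
    have "\<forall>(F::nat) (p::nat \<Rightarrow> 'b) (c::nat \<Rightarrow> real). (\<forall>i<F. p i \<in> S) \<longrightarrow>
        0 \<le> (\<Sum>i<F. \<Sum>j<F. c i * c j * k (p i) (p j))" using pd unfolding pd_kernel_def by (rule conjunct2)
    note H = spec[OF spec[OF spec[OF this, of n], of "p \<circ> E"], of "c \<circ> E"]
    have "(\<forall>i<n. p (E i) \<in> S) \<longrightarrow> 0 \<le> (\<Sum>a<n. \<Sum>b<n. c (E a) * c (E b) * k (p (E a)) (p (E b)))"
      using H by simp
    then show ?thesis using P by simp
  qed
  then show ?thesis unfolding reidx .
qed

lemma invertible_inv_right:
  fixes M :: "real^'n^'n"
  assumes "invertible M"
  shows "M ** matrix_inv M = mat 1"
  using assms unfolding invertible_def matrix_inv_def by (rule someI_ex[where P = "\<lambda>A'. M ** A' = mat 1 \<and> A' ** M = mat 1", THEN conjunct1])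

lemma inner_mat: "(y::real^'m) \<bullet> (A *v w) = (transpose A *v y) \<bullet> (w::real^'n)"
  unfolding inner_vec_def matrix_vector_mult_def transpose_def
  by (simp add: sum_distrib_left sum_distrib_right mult_ac) (rule sum.swap)

lemma gram_form:
  "w \<bullet> (gram kb X Y *v w) = (\<Sum>l\<in>UNIV. \<Sum>i\<in>UNIV. \<Sum>j\<in>UNIV. (w$i * Y i$l) * (w$j * Y j$l) * kb l (X i) (X j))"
proof -
  have "w \<bullet> (gram kb X Y *v w) = (\<Sum>i\<in>UNIV. \<Sum>j\<in>UNIV. \<Sum>l\<in>UNIV. (w$i * Y i$l) * (w$j * Y j$l) * kb l (X i) (X j))"
    unfolding inner_vec_def matrix_vector_mult_def gram_def
    by (simp add: sum_distrib_left sum_distrib_right mult_ac)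
  also have "\<dots> = (\<Sum>i\<in>UNIV. \<Sum>l\<in>UNIV. \<Sum>j\<in>UNIV. (w$i * Y i$l) * (w$j * Y j$l) * kb l (X i) (X j))"
    by (rule sum.cong[OF refl]) (rule sum.swap)
  also have "\<dots> = (\<Sum>l\<in>UNIV. \<Sum>i\<in>UNIV. \<Sum>j\<in>UNIV. (w$i * Y i$l) * (w$j * Y j$l) * kb l (X i) (X j))"
    by (rule sum.swap)
  finally show ?thesis .
qed

lemma gp_var_psd:
  fixes kb :: "'m::finite option \<Rightarrow> real^'n \<Rightarrow> real^'n \<Rightarrow> real" and X :: "'N::finite \<Rightarrow> real^'n"
    and Y :: "'N \<Rightarrow> real^('m option)" and y :: "real^('m option)"
  assumes pd: "\<forall>l. pd_kernel S (kb l)" and xS: "x \<in> S" and XS: "\<forall>j. X j \<in> S" and sn: "sn2 > 0"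
  shows "0 \<le> gp_var kb X Y sn2 x y"
proof -
  define G where "G = gram kb X Y"
  define M where "M = G + sn2 *\<^sub>R mat 1"
  define Kb where "Kb = kbar kb X Y x"
  define Mi where "Mi = matrix_inv M"
  have sym: "kb l a b = kb l b a" if "a \<in> S" "b \<in> S" for l a b
    using pd that unfolding pd_kernel_def by blast
  have Gpsd: "0 \<le> w \<bullet> (G *v w)" for w
    unfolding G_def gram_form
    by (rule sum_nonneg, rule pd_sum[OF pd[rule_format] XS])
  have Mform: "w \<bullet> (M *v w) = w \<bullet> (G *v w) + sn2 * (w \<bullet> w)" for w
    unfolding M_def by (simp add: matrix_vector_mult_add_rdistrib scaleR_matrix_vector_assoc[symmetric] inner_add_right)
  have "inj ((*v) M)"
  proof (rule injI)
    fix a b assume "M *v a = M *v b"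
    then have "M *v (a - b) = 0" by (simp add: matrix_vector_mult_diff_distrib)
    then have "(a - b) \<bullet> (M *v (a - b)) = 0" by simp
    then have "sn2 * ((a - b) \<bullet> (a - b)) \<le> 0" using Mform[of "a - b"] Gpsd[of "a - b"] by linarith
    then have "(a - b) \<bullet> (a - b) \<le> 0" using sn by (simp add: mult_le_0_iff)
    then show "a = b" by (metis eq_iff_diff_eq_0 inner_eq_zero_iff inner_ge_zero order_antisym)
  qed
  then obtain B where "B ** M = mat 1" using matrix_left_invertible_injective by blast
  then have "invertible M" using invertible_left_inverse by blast
  then have MMi: "M ** Mi = mat 1" unfolding Mi_def by (rule invertible_inv_right)
  define v where "v = transpose Kb *v y"
  define w where "w = Mi *v v"
  have Mw: "M *v w = v" unfolding w_def matrix_vector_mul_assoc MMi by simp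
  have var: "gp_var kb X Y sn2 x y = y \<bullet> (Lam kb x x *v y) - v \<bullet> w"
  proof -
    have "(Kb ** Mi ** transpose Kb) *v y = Kb *v w"
      unfolding w_def v_def by (simp only: matrix_vector_mul_assoc matrix_mul_assoc)
    then show ?thesis
      unfolding gp_var_def G_def[symmetric] M_def[symmetric] Kb_def[symmetric] Mi_def[symmetric]
      by (simp add: matrix_vector_mult_diff_rdistrib inner_diff_right inner_mat v_def)
  qed
  have vw1: "v \<bullet> w = w \<bullet> (G *v w) + sn2 * (w \<bullet> w)"
    using Mform[of w] Mw by (simp add: inner_commute)
  define T1 where "T1 = (\<Sum>l\<in>UNIV. kb l x x * (y$l)\<^sup>2)"
  define T2 where "T2 = (\<Sum>l\<in>UNIV. \<Sum>j\<in>UNIV. y$l * (w$j * Y j$l) * kb l x (X j))"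
  define T3 where "T3 = (\<Sum>l\<in>UNIV. \<Sum>i\<in>UNIV. \<Sum>j\<in>UNIV. (w$i * Y i$l) * (w$j * Y j$l) * kb l (X i) (X j))"
  have aux: "(\<Sum>j\<in>UNIV. (if i = j then c else 0) * y$j) = c * y$i" for i c
  proof -
    have "(\<Sum>j\<in>UNIV. (if i = j then c else 0) * y$j) = (\<Sum>j\<in>UNIV. if i = j then c * y$j else 0)"
      by (rule sum.cong) auto
    then show ?thesis by simp
  qed
  have t1: "y \<bullet> (Lam kb x x *v y) = T1"
  proof -
    have aux2: "(\<Sum>j\<in>UNIV. y $ j * (if i = j then c else 0)) = c * y$i" for i c
      using aux[of i c] by (simp add: mult.commute)
    show ?thesis unfolding T1_def Lam_def inner_vec_def matrix_vector_mult_def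
      by (simp add: aux aux2 power2_eq_square mult_ac)
  qed
  have t2: "v \<bullet> w = T2"
  proof -
    have "v \<bullet> w = (\<Sum>j\<in>UNIV. \<Sum>l\<in>UNIV. y$l * (w$j * Y j$l) * kb l x (X j))"
      unfolding v_def Kb_def kbar_def inner_vec_def matrix_vector_mult_def transpose_def
      by (simp add: sum_distrib_left sum_distrib_right mult_ac)
    also have "\<dots> = T2" unfolding T2_def by (rule sum.swap)
    finally show ?thesis .
  qed
  have t3: "w \<bullet> (G *v w) = T3" unfolding T3_def G_def gram_form ..
  have PL: "0 \<le> T1 - 2 * T2 + T3"
  proof -
    define P where "P l = (\<Sum>i\<in>UNIV. \<Sum>j\<in>UNIV.
        (case i of None \<Rightarrow> y$l | Some a \<Rightarrow> - (w$a * Y a$l)) * (case j of None \<Rightarrow> y$l | Some a \<Rightarrow> - (w$a * Y a$l))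
        * kb l (case i of None \<Rightarrow> x | Some a \<Rightarrow> X a) (case j of None \<Rightarrow> x | Some a \<Rightarrow> X a))" for l
    have P0: "0 \<le> P l" for l
      unfolding P_def by (rule pd_sum[OF pd[rule_format]]) (simp add: xS XS split: option.split)
    have Peq: "P l = kb l x x * (y$l)\<^sup>2 - 2 * (\<Sum>j\<in>UNIV. y$l * (w$j * Y j$l) * kb l x (X j))
                 + (\<Sum>i\<in>UNIV. \<Sum>j\<in>UNIV. (w$i * Y i$l) * (w$j * Y j$l) * kb l (X i) (X j))" for l
    proof -
      have s: "kb l (X a) x = kb l x (X a)" for a using sym xS XS by metis
      show ?thesis
        unfolding P_def sum_option
        by (simp add: s sum.distrib sum_negf power2_eq_square sum_subtractf algebra_simps)
    qed
    have "(\<Sum>l\<in>UNIV. P l) = T1 - 2 * T2 + T3"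
      unfolding Peq T1_def T2_def T3_def by (simp add: sum.distrib sum_subtractf sum_distrib_left)
    moreover have "0 \<le> (\<Sum>l\<in>UNIV. P l)" by (rule sum_nonneg) (simp add: P0)
    ultimately show ?thesis by simp
  qed
  have "0 \<le> sn2 * (w \<bullet> w)" using sn by simp
  then show ?thesis using var vw1 t1 t2 t3 PL by linarith
qed



lemma lin_rep:
  fixes f :: "real^'k \<Rightarrow> real"
  assumes lf: "linear f"
  shows "f y = (\<chi> i. f (axis i 1)) \<bullet> y"
proof -
  have "f y = f (\<Sum>i\<in>UNIV. y$i *\<^sub>R axis i 1)"
    using basis_expansion[of y] by (simp add: scalar_mult_eq_scaleR)
  also have "\<dots> = (\<Sum>i\<in>UNIV. y$i * f (axis i 1))"
    by (simp add: linear_sum[OF lf] linear_scale[OF lf])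
  also have "\<dots> = (\<chi> i. f (axis i 1)) \<bullet> y"
    unfolding inner_vec_def by (simp add: mult.commute)
  finally show ?thesis .
qed

lemma chi_add: "(\<chi> j. (a::real^'k) $ g j + b $ g j) = (\<chi> j. a $ g j) + (\<chi> j. b $ g j)"
  by (simp add: vec_eq_iff)
lemma chi_scale: "(\<chi> j. (c::real) * a $ g j) = c *\<^sub>R (\<chi> j. a $ g j)"
  by (simp add: vec_eq_iff)

lemma lin_phi:
  fixes D :: "real^'n \<Rightarrow> real" and gx :: "real^'m^'n" and fx :: "real^'n"
  assumes D: "linear D"
  shows "linear (\<lambda>y::real^('m::finite option). D fx * y$None + D (gx *v (\<chi> j. y$Some j))
           + gp_mean kb X Y \<omega> sn2 x y + c * y$None)"
  unfolding linear_iff gp_mean_def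
  by (simp add: algebra_simps linear_add[OF D] linear_scale[OF D] matrix_vector_mult_scaleR
         inner_add_right chi_add chi_scale del: transpose_matrix_vector)

lemma sd_rep:
  fixes kb :: "'m::finite option \<Rightarrow> real^'n \<Rightarrow> real^'n \<Rightarrow> real" and X :: "'N::finite \<Rightarrow> real^'n"
    and Y :: "'N \<Rightarrow> real^('m option)"
  assumes pd: "\<forall>l. pd_kernel S (kb l)" and xS: "x \<in> S" and XS: "\<forall>j. X j \<in> S" and sn: "sn2 > 0"
    and b: "beta \<ge> 0"
  shows "\<exists>(g::nat \<Rightarrow> real^('m option)) K. \<forall>y. beta * gp_sd kb X Y sn2 x y = sqrt (\<Sum>l<K. (g l \<bullet> y)\<^sup>2)"
proof -
  define A where "A = Lam kb x x - kbar kb X Y x ** matrix_inv (gram kb X Y + sn2 *\<^sub>R mat 1)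
            ** transpose (kbar kb X Y x)"
  have var: "gp_var kb X Y sn2 x y = y \<bullet> (A *v y)" for y unfolding gp_var_def A_def ..
  have "\<forall>y. 0 \<le> y \<bullet> (A *v y)" using gp_var_psd[OF pd xS XS sn] var by metis
  from sos_vec[OF this] obtain ls :: "nat \<Rightarrow> real^('m option)" and K :: nat where ls: "\<forall>y. y \<bullet> (A *v y) = (\<Sum>l<K. (ls l \<bullet> y)\<^sup>2)" by blast
  have "beta * gp_sd kb X Y sn2 x y = sqrt (\<Sum>l<K. ((beta *\<^sub>R ls l) \<bullet> y)\<^sup>2)" for y
  proof -
    have "beta * gp_sd kb X Y sn2 x y = sqrt (beta\<^sup>2) * sqrt (\<Sum>l<K. (ls l \<bullet> y)\<^sup>2)"
      unfolding gp_sd_def var ls[rule_format] using b by simp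
    also have "\<dots> = sqrt (\<Sum>l<K. ((beta *\<^sub>R ls l) \<bullet> y)\<^sup>2)"
      by (simp add: real_sqrt_mult sum_distrib_left[symmetric] power_mult_distrib)
    finally show ?thesis .
  qed
  then show ?thesis by (intro exI[of _ "\<lambda>l. beta *\<^sub>R ls l"] exI[of _ K] allI) simp
qed

lemma frechet_linear:
  assumes "C1_on S f" "x \<in> S"
  shows "linear (frechet_derivative f (at x))"
proof -
  from assms(1) obtain D where D: "\<forall>x\<in>S. (f has_derivative blinfun_apply (D x)) (at x)"
    unfolding C1_on_def by blast
  then have "blinfun_apply (D x) = frechet_derivative f (at x)"
    using assms(2) by (simp add: frechet_derivative_at)
  moreover have "linear (blinfun_apply (D x))"
    by (simp add: bounded_linear.linear bounded_linear_blinfun_apply)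
  ultimately show ?thesis by simp
qed

lemma aug_parts: "aug u $ None = 1" "(\<chi> j. aug u $ Some j) = u"
  by (simp_all add: aug_def vec_eq_iff)


theorem theorem1:
  fixes Xs :: "(real^'n) set" and Reg :: "nat \<Rightarrow> (real^'n) set" and R r :: nat
    and fh :: "real^'n \<Rightarrow> real^'n" and gh :: "real^'n \<Rightarrow> real^'m^'n"
    and V h :: "real^'n \<Rightarrow> real"
    and kV kh :: "'m option \<Rightarrow> real^'n \<Rightarrow> real^'n \<Rightarrow> real"
    and X :: "'N::finite \<Rightarrow> real^'n" and Y :: "'N \<Rightarrow> real^('m option)"
    and omegaV omegah :: "real^'N" and sn2 :: real
    and x :: "real^'n" and rho lam beta :: real and alpha :: "real \<Rightarrow> real" and a :: ereal
  assumes "compact Xs" and "convex Xs"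
    and "\<forall>i\<in>{1..R}. \<forall>j\<in>{1..R}. i \<noteq> j \<longrightarrow> Reg i \<inter> Reg j = {}"
    and "(\<Union>i\<in>{1..R}. Reg i) = Xs"
    and "r \<in> {1..R}" and "x \<in> Reg r"
    and "locally_lipschitz fh" and "locally_lipschitz gh"
    and "C1_on Xs V" and "C1_on UNIV h"
    and "\<forall>l. pd_kernel (Reg r) (kV l)" and "\<forall>l. pd_kernel (Reg r) (kh l)"
    and "\<forall>j. X j \<in> Reg r" and "\<forall>j. Y j $ None = 1"
    and "sn2 > 0"
    and "rho > 0" and "lam > 0" and "beta \<ge> 0" and "class_K a alpha"
  defines "F \<equiv> {(u, d). nominal_deriv V fh gh x u + gp_mean kV X Y omegaV sn2 x (aug u)
                           + beta * gp_sd kV X Y sn2 x (aug u) + lam * V x \<le> d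
                      \<and> nominal_deriv h fh gh x u + gp_mean kh X Y omegah sn2 x (aug u)
                           - beta * gp_sd kh X Y sn2 x (aug u) + alpha (h x) \<ge> 0}"
    and "J \<equiv> (\<lambda>(u :: real^'m, d :: real). (norm u)\<^sup>2 + rho * d\<^sup>2)"
  shows "convex F \<and> convex_on F J \<and> socp_equivalent F J"
proof -
  have xXs: "x \<in> Xs" using assms(4,5,6) by blast
  define DV where "DV = frechet_derivative V (at x)"
  define Dh where "Dh = frechet_derivative h (at x)"
  have linDV: "linear DV" unfolding DV_def by (rule frechet_linear[OF assms(9) xXs])
  have linDh: "linear Dh" unfolding Dh_def by (rule frechet_linear[OF assms(10)]) simp
  define PhiV where "PhiV = (\<lambda>y::real^('m option). DV (fh x) * y$None + DV (gh x *v (\<chi> j. y$Some j))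
           + gp_mean kV X Y omegaV sn2 x y + (lam * V x) * y$None)"
  define PhiH where "PhiH = (\<lambda>y::real^('m option). Dh (fh x) * y$None + Dh (gh x *v (\<chi> j. y$Some j))
           + gp_mean kh X Y omegah sn2 x y + alpha (h x) * y$None)"
  define cV where "cV = (\<chi> i. PhiV (axis i 1))"
  define cH where "cH = (\<chi> i. PhiH (axis i 1))"
  have cVeq: "cV \<bullet> aug u = nominal_deriv V fh gh x u + gp_mean kV X Y omegaV sn2 x (aug u) + lam * V x" for u
  proof -
    have "PhiV (aug u) = cV \<bullet> aug u" unfolding cV_def PhiV_def
      by (rule lin_rep[OF lin_phi[OF linDV]])
    then show ?thesis unfolding PhiV_def nominal_deriv_def DV_def aug_parts by simp
  qed
  have cHeq: "cH \<bullet> aug u = nominal_deriv h fh gh x u + gp_mean kh X Y omegah sn2 x (aug u) + alpha (h x)" for u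
  proof -
    have "PhiH (aug u) = cH \<bullet> aug u" unfolding cH_def PhiH_def
      by (rule lin_rep[OF lin_phi[OF linDh]])
    then show ?thesis unfolding PhiH_def nominal_deriv_def Dh_def aug_parts by simp
  qed
  obtain gV :: "nat \<Rightarrow> real^('m option)" and KV :: nat
    where gV: "\<forall>y. beta * gp_sd kV X Y sn2 x y = sqrt (\<Sum>l<KV. (gV l \<bullet> y)\<^sup>2)"
    using sd_rep[OF assms(11,6,13,15,18)] by blast
  obtain gH :: "nat \<Rightarrow> real^('m option)" and KH :: nat
    where gH: "\<forall>y. beta * gp_sd kh X Y sn2 x y = sqrt (\<Sum>l<KH. (gH l \<bullet> y)\<^sup>2)"
    using sd_rep[OF assms(12,6,13,15,18)] by blast
  have Feq: "F = {(u::real^'m, d::real). sqrt (\<Sum>l<KV. (gV l \<bullet> aug u)\<^sup>2) \<le> d - cV \<bullet> aug u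
            \<and> sqrt (\<Sum>l<KH. (gH l \<bullet> aug u)\<^sup>2) \<le> cH \<bullet> aug u}"
    unfolding F_def cVeq cHeq gV[rule_format, symmetric] gH[rule_format, symmetric]
    by (auto simp: algebra_simps)
  have c1: "convex F" unfolding Feq by (rule convex_F_generic)
  have c2: "convex_on F J" unfolding J_def
    by (rule convex_on_subset[OF convex_on_J[OF assms(16)] subset_UNIV c1])
  have c3: "socp_equivalent F J" unfolding Feq J_def by (rule socp_generic[OF assms(16)])
  show ?thesis using c1 c2 c3 by blast
qed

end
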